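(* Let $\ell\ge1$ be an integer and $S_1,\dots,S_m$ site states. For $n$ sufficiently large, let $S=S_1\otimes\cdots\otimes S_m\otimes V^{\otimes n}$. If the carrier $u_\ell=(\ell,0,0)$ is passed successively through $S_1,\dots,S_m$ and then the $n$ vacuum sites, each step applying the map $R$, then the final carrier state is again $u_\ell$; i.e. $u_\ell\otimes S\simeq S'\otimes u_\ell$ under repeated application of $R$, for some $S'$.
   Context: A site state is a triple $(d,e,f)$ of nonnegative integers with $d=e-f+1$; $V=(1,0,0)$. Carrier states are triples $(a,b,c)$ of nonnegative integers. The map $R$ sends a carrier $(a,b,c)$ and a site $(d,e,f)$ to a site $(d',e',f')$ and a carrier $(a',b',c')$ with $d'=d+\min(a+b,a+c,b+f)-\min(e+c,d+c,d+b)$, $e'=e+\min(a+b,a+c,b+f)-\min(a+e,d+f,e+f)$, $f'=f+\min(e+c,d+c,d+b)-\min(a+e,d+f,e+f)$, $a'=a-\min(a+b,a+c,b+f)+\min(e+c,d+c,d+b)$, $b'=b-\min(a+b,a+c,b+f)+\min(a+e,d+f,e+f)$, $c'=c-\min(e+c,d+c,d+b)+\min(a+e,d+f,e+f)$. (This $R$ is the tropicalization of a three-wire whurl relation; it preserves $a-b+c$ and $d-e+f$.) The notation $X\otimes S_1\otimes\cdots\otimes S_k\simeq S_1'\otimes\cdots\otimes S_k'\otimes X'$ means that passing carrier $X$ through $S_1,\dots,S_k$ in order via $R$ produces sites $S_j'$ and final carrier $X'$. *)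

theory Defs
  imports Main
begin

type_synonym triple = "int \<times> int \<times> int"

definition R :: "triple \<Rightarrow> triple \<Rightarrow> triple \<times> triple" where
  "R X S = (case X of (a,b,c) \<Rightarrow> case S of (d,e,f) \<Rightarrow>
     (let p = min (min (a+b) (a+c)) (b+f);
          q = min (min (e+c) (d+c)) (d+b);
          r = min (min (a+e) (d+f)) (e+f)
      in ((d + p - q, e + p - r, f + q - r), (a - p + q, b - p + r, c - q + r))))"

definition is_site :: "triple \<Rightarrow> bool" where
  "is_site S = (case S of (d,e,f) \<Rightarrow> d \<ge> 0 \<and> e \<ge> 0 \<and> f \<ge> 0 \<and> d = e - f + 1)"

definition vac :: triple where "vac = (1,0,0)"

fun pass :: "triple \<Rightarrow> triple list \<Rightarrow> triple list \<times> triple" where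
  "pass X [] = ([], X)"
| "pass X (S # Ss) = (let (S', X') = R X S; (Ss', X'') = pass X' Ss in (S' # Ss', X''))"

end

theory Submission
  imports Defs
begin

lemma m3: "t \<le> min (min x y) (z::int) \<longleftrightarrow> t \<le> x \<and> t \<le> y \<and> t \<le> z" by auto
lemma R_nn:
  assumes "a \<ge> 0" "b \<ge> 0" "c \<ge> 0" "d \<ge> 0" "e \<ge> 0" "f \<ge> 0"
  shows "\<exists>a' b' c'. snd (R (a,b,c) (d,e,f)) = (a',b',c') \<and> a' \<ge> 0 \<and> b' \<ge> 0 \<and> c' \<ge> 0 \<and> a' - b' + c' = a - b + c"
proof -
  define p where "p = min (min (a+b) (a+c)) (b+f)"
  define q where "q = min (min (e+c) (d+c)) (d+b)"
  define r where "r = min (min (a+e) (d+f)) (e+f)"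
  have p: "p \<le> a+b" "p \<le> a+c" "p \<le> b+f" unfolding p_def by auto
  have q: "q \<le> e+c" "q \<le> d+c" "q \<le> d+b" unfolding q_def by auto
  have q2: "q \<ge> p - a" unfolding q_def using p assms by (simp only: m3) linarith
  have r2: "r \<ge> p - b" "r \<ge> q - c" unfolding r_def using p q assms by (simp only: m3; linarith)+
  have "snd (R (a,b,c) (d,e,f)) = (a - p + q, b - p + r, c - q + r)"
    unfolding R_def Let_def p_def q_def r_def by simp
  thus ?thesis using q2 r2 by auto
qed
lemma vac_step:
  assumes "a \<ge> 0" "b \<ge> 0" "c \<ge> 0" "a - b + c = l" "l \<ge> 1"
  shows "\<exists>a' b' c'. snd (R (a,b,c) vac) = (a',b',c') \<and> a' \<ge> 0 \<and> b' \<ge> 0 \<and> c' \<ge> 0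
     \<and> a' - b' + c' = l \<and> (b + c = 0 \<longrightarrow> (a',b',c') = (a,b,c)) \<and> (b + c > 0 \<longrightarrow> b' + c' < b + c)"
proof -
  define p where "p = min (min (a+b) (a+c)) b"
  define q where "q = min c (1+b)"
  have p: "p \<ge> 0" "p \<le> b" "p \<le> a + c" "c = 0 \<and> b > 0 \<longrightarrow> p \<ge> 1" "b = 0 \<longrightarrow> p = 0"
    unfolding p_def using assms by (auto simp: min_def)
  have q: "q \<ge> 0" "q \<le> c" "c > 0 \<longrightarrow> q \<ge> 1" "c = 0 \<longrightarrow> q = 0" "q = c \<or> q = 1 + b"
    unfolding q_def using assms by (auto simp: min_def)
  have "snd (R (a,b,c) vac) = (a - p + q, b - p, c - q)"
    unfolding R_def Let_def p_def q_def vac_def using assms by (simp add: min_def)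
  thus ?thesis using assms p q by auto
qed

lemma pass_Cons_snd: "snd (pass X (S # Ss)) = snd (pass (snd (R X S)) Ss)"
  by (simp add: split_def Let_def)

lemma pass_append: "snd (pass X (xs @ ys)) = snd (pass (snd (pass X xs)) ys)"
  by (induction xs arbitrary: X) (simp_all del: pass.simps(2) add: pass_Cons_snd)

lemma pass_nn:
  assumes "a \<ge> 0" "b \<ge> 0" "c \<ge> 0" "\<forall>S\<in>set Ss. is_site S"
  shows "\<exists>a' b' c'. snd (pass (a,b,c) Ss) = (a',b',c') \<and> a' \<ge> 0 \<and> b' \<ge> 0 \<and> c' \<ge> 0 \<and> a' - b' + c' = a - b + c"
  using assms
proof (induction Ss arbitrary: a b c)
  case Nil thus ?case by simp
next
  case (Cons S Ss)
  obtain d e f where S: "S = (d,e,f)" by (cases S) auto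
  have "d \<ge> 0" "e \<ge> 0" "f \<ge> 0" using Cons.prems(4) unfolding S is_site_def by auto
  then obtain a1 b1 c1 where h: "snd (R (a,b,c) S) = (a1,b1,c1)" "a1 \<ge> 0" "b1 \<ge> 0" "c1 \<ge> 0" "a1 - b1 + c1 = a - b + c"
    using R_nn[OF Cons.prems(1-3)] S by blast
  obtain a2 b2 c2 where h2: "snd (pass (a1,b1,c1) Ss) = (a2,b2,c2)" "a2 \<ge> 0" "b2 \<ge> 0" "c2 \<ge> 0" "a2 - b2 + c2 = a1 - b1 + c1"
    using Cons.IH[OF h(2-4)] Cons.prems(4) by auto
  have "snd (pass (a,b,c) (S # Ss)) = snd (pass (snd (R (a,b,c) S)) Ss)"
    by (rule pass_Cons_snd)
  thus ?case using h h2 by auto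
qed

lemma vac_conv:
  assumes "a \<ge> 0" "b \<ge> 0" "c \<ge> 0" "a - b + c = l" "l \<ge> 1" "n \<ge> nat (b + c)"
  shows "snd (pass (a,b,c) (replicate n vac)) = (l,0,0)"
  using assms
proof (induction n arbitrary: a b c)
  case 0 thus ?case by simp
next
  case (Suc n)
  obtain a' b' c' where h: "snd (R (a,b,c) vac) = (a',b',c')" "a' \<ge> 0" "b' \<ge> 0" "c' \<ge> 0"
     "a' - b' + c' = l" "b + c = 0 \<longrightarrow> (a',b',c') = (a,b,c)" "b + c > 0 \<longrightarrow> b' + c' < b + c"
    using vac_step[OF Suc.prems(1-5)] by blast
  have "n \<ge> nat (b' + c')"
  proof (cases "b + c = 0")
    case True thus ?thesis using h(6) by simp
  next
    case False thus ?thesis using h(7) Suc.prems(2,3,6) by linarith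
  qed
  hence "snd (pass (a',b',c') (replicate n vac)) = (l,0,0)"
    by (rule Suc.IH[OF h(2) h(3) h(4) h(5) Suc.prems(5)])
  moreover have "snd (pass (a,b,c) (replicate (Suc n) vac)) = snd (pass (snd (R (a,b,c) vac)) (replicate n vac))"
    by (simp only: replicate_Suc pass_Cons_snd)
  ultimately show ?case using h(1) by simp
qed

theorem mainTheorem7:
  fixes l :: int and Ss :: "triple list"
  assumes "l \<ge> 1" and "\<forall>S\<in>set Ss. is_site S"
  shows "\<exists>N. \<forall>n\<ge>N. snd (pass (l,0,0) (Ss @ replicate n vac)) = (l,0,0)"
proof -
  obtain a b c where X: "snd (pass (l,0,0) Ss) = (a,b,c)" "a \<ge> 0" "b \<ge> 0" "c \<ge> 0" "a - b + c = l"
    using pass_nn[of l 0 0 Ss] assms by auto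
  show ?thesis
  proof (intro exI allI impI)
    fix n assume "n \<ge> nat (b + c)"
    thus "snd (pass (l,0,0) (Ss @ replicate n vac)) = (l,0,0)"
      using vac_conv[OF X(2-5) assms(1)] X(1) by (simp add: pass_append)
  qed
qed

end
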